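(* Given $\beta_0,\beta_1,\ldots\in\omega^\omega$, there exists $\alpha\in\omega^\omega$ such that for every continuous injective group homomorphism $\Phi:S_\infty\to S_\infty$ we have $\Phi(K_\alpha)\not\subseteq\bigcup_n K_{\beta_n}$.
   Context: $S_\infty$ is the group of all permutations of $\omega$ with the topology of pointwise convergence. For $\alpha\in\omega^\omega$, $K_\alpha=\{f\in S_\infty: f\le\alpha \text{ and } f^{-1}\le\alpha\}$, where $f\le\alpha$ means $f(n)\le\alpha(n)$ for all $n\in\omega$. *)

theory Defs
  imports "HOL-Analysis.Analysis" "HOL-Algebra.Bij"
begin

text \<open>As a set of functions it is
  the carrier of the symmetric group BijGroup UNIV; its topology is the subspace
  topology of the product (pointwise convergence) topology on nat => nat
  (nat carries the discrete topology).\<close>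
definition Sinf :: "(nat \<Rightarrow> nat) set" where
  "Sinf = {f. bij f}"

definition K :: "(nat \<Rightarrow> nat) \<Rightarrow> (nat \<Rightarrow> nat) set" where
  "K \<alpha> = {f \<in> Sinf. (\<forall>n. f n \<le> \<alpha> n) \<and> (\<forall>n. inv_into UNIV f n \<le> \<alpha> n)}"

end

theory Submission imports Defs begin
definition tr :: "nat \<Rightarrow> nat \<Rightarrow> nat \<Rightarrow> nat" where
  "tr a b c = (if c = a then b else if c = b then a else c)"

lemma tr_inv[simp]: "tr a b (tr a b c) = c" by (auto simp: tr_def)
lemma tr_comp_self: "tr a b \<circ> tr a b = id" by (auto simp: tr_def fun_eq_iff)
lemma bij_tr[simp]: "bij (tr a b)"
  by (metis bij_betw_byWitness tr_inv subset_UNIV)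
lemma inv_tr[simp]: "inv_into UNIV (tr a b) = tr a b"
  by (metis bij_tr comp_id inv_o_cancel o_assoc tr_comp_self bij_is_inj)

lemma hom_props:
  assumes "\<Phi> \<in> hom (BijGroup (UNIV :: nat set)) (BijGroup (UNIV :: nat set))"
  shows "\<And>f. bij f \<Longrightarrow> bij (\<Phi> f)"
    and "\<And>f g. bij f \<Longrightarrow> bij g \<Longrightarrow> \<Phi> (f \<circ> g) = \<Phi> f \<circ> \<Phi> g"
proof -
  have c: "carrier (BijGroup (UNIV::nat set)) = {f. bij f}"
    by (auto simp: BijGroup_def Bij_def)
  have m: "f \<otimes>\<^bsub>BijGroup (UNIV::nat set)\<^esub> g = f \<circ> g" if "bij f" "bij g" for f g :: "nat \<Rightarrow> nat"
    using that by (auto simp: BijGroup_def compose_def fun_eq_iff Bij_def)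
  show "\<And>f. bij f \<Longrightarrow> bij (\<Phi> f)" using assms c by (auto simp: hom_def)
  show "\<And>f g. bij f \<Longrightarrow> bij g \<Longrightarrow> \<Phi> (f \<circ> g) = \<Phi> f \<circ> \<Phi> g"
    using assms c m by (auto simp: hom_def)
qed

lemma cont_pt:
  fixes \<Phi> :: "(nat \<Rightarrow> nat) \<Rightarrow> (nat \<Rightarrow> nat)"
  assumes "continuous_on Sinf \<Phi>" "f \<in> Sinf"
  shows "\<exists>N. \<forall>g\<in>Sinf. (\<forall>i<N. g i = f i) \<longrightarrow> \<Phi> g z = \<Phi> f z"
proof -
  have "continuous_on Sinf (\<lambda>g. \<Phi> g z)"
    using continuous_on_product_then_coordinatewise[OF assms(1)] .
  then obtain A where A: "open A" "A \<inter> Sinf = (\<lambda>g. \<Phi> g z) -` {\<Phi> f z} \<inter> Sinf"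
    unfolding continuous_on_open_invariant by (meson open_discrete)
  have fA: "f \<in> A" using A assms(2) by auto
  obtain X where X: "f \<in> (\<Pi>\<^sub>E i\<in>UNIV. X i)" "finite {i. X i \<noteq> topspace euclidean}"
     "(\<Pi>\<^sub>E i\<in>UNIV. X i) \<subseteq> A"
    using product_topology_open_contains_basis[of "\<lambda>i. euclidean" UNIV A f] A(1) fA
    unfolding open_fun_def by blast
  define F where "F = {i. X i \<noteq> topspace euclidean}"
  have "finite F" using X F_def by simp
  then obtain N where N: "\<forall>i\<in>F. i < N" by (metis finite_nat_set_iff_bounded)
  show ?thesis
  proof (intro exI ballI impI)
    fix g assume g: "g \<in> Sinf" "\<forall>i<N. g i = f i"
    have "g \<in> (\<Pi>\<^sub>E i\<in>UNIV. X i)"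
    proof -
      have "g i \<in> X i" for i
      proof (cases "i < N")
        case True then show ?thesis using g X(1) by (auto simp: PiE_iff)
      next
        case False then have "i \<notin> F" using N by auto
        then show ?thesis by (auto simp: F_def)
      qed
      then show ?thesis by (auto simp: PiE_iff)
    qed
    then have "g \<in> A" using X by auto
    then show "\<Phi> g z = \<Phi> f z" using A g by auto
  qed
qed


abbreviation iv :: "(nat \<Rightarrow> nat) \<Rightarrow> nat \<Rightarrow> nat" where "iv f \<equiv> inv_into UNIV f"

definition bnd :: "(nat \<Rightarrow> nat) \<Rightarrow> (nat \<Rightarrow> nat) \<Rightarrow> bool" where
  "bnd C f \<longleftrightarrow> (\<forall>y. f y \<le> C y \<and> iv f y \<le> C y)"

lemma K_iff: "f \<in> K a \<longleftrightarrow> bij f \<and> bnd a f"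
  by (auto simp: K_def Sinf_def bnd_def)

lemma bnd_inv: "bij f \<Longrightarrow> bnd C f \<Longrightarrow> bnd C (iv f)"
  by (simp add: bnd_def inv_inv_eq)

lemma iter_ge: "(\<And>k. k \<le> (B::nat\<Rightarrow>nat) k) \<Longrightarrow> x \<le> (B ^^ j) x"
  by (induction j) (auto intro: order_trans)

lemma iter_mono: "mono (B::nat\<Rightarrow>nat) \<Longrightarrow> x \<le> y \<Longrightarrow> (B ^^ j) x \<le> (B ^^ j) y"
  by (induction j) (auto simp: mono_def)

lemma iter_ge_plus: "(\<And>k. Suc k \<le> (B::nat\<Rightarrow>nat) k) \<Longrightarrow> x + j \<le> (B ^^ j) x"
proof (induction j)
  case (Suc j) then show ?case by (simp, metis add_Suc_right le_trans not_less_eq_eq)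
qed simp

lemma smono_plus: "strict_mono (B::nat\<Rightarrow>nat) \<Longrightarrow> B x + d \<le> B (x + d)"
proof (induction d)
  case (Suc d)
  have "B (x + d) < B (x + Suc d)" using Suc.prems by (simp add: strict_mono_def)
  then show ?case using Suc by simp
qed simp

lemma iter_smono: "strict_mono (B::nat\<Rightarrow>nat) \<Longrightarrow> strict_mono (B ^^ j)"
  by (induction j) (auto simp: strict_mono_def)

lemma bnd_comp:
  assumes "mono (B::nat\<Rightarrow>nat)" "bij f" "bij g" "bnd (B ^^ i) f" "bnd (B ^^ j) g"
  shows "bnd (B ^^ (i + j)) (f \<circ> g)"
proof -
  have "f (g y) \<le> (B ^^ (i + j)) y" for y
  proof -
    have "f (g y) \<le> (B ^^ i) (g y)" using assms(4) by (simp add: bnd_def)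
    also have "\<dots> \<le> (B ^^ i) ((B ^^ j) y)" using assms(5) iter_mono[OF assms(1)] by (simp add: bnd_def)
    finally show ?thesis by (simp add: funpow_add)
  qed
  moreover have "iv g (iv f y) \<le> (B ^^ (i + j)) y" for y
  proof -
    have "iv g (iv f y) \<le> (B ^^ j) (iv f y)" using assms(5) by (simp add: bnd_def)
    also have "\<dots> \<le> (B ^^ j) ((B ^^ i) y)" using assms(4) iter_mono[OF assms(1)] by (simp add: bnd_def)
    finally show ?thesis by (metis add.commute comp_apply funpow_add)
  qed
  ultimately show ?thesis using assms(2,3) by (simp add: bnd_def o_inv_distrib)
qed

lemma bnd_weaken:
  assumes "\<And>k. k \<le> (B::nat\<Rightarrow>nat) k" "i \<le> j" "bnd (B ^^ i) f"
  shows "bnd (B ^^ j) f"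
proof -
  have e: "(B ^^ j) y = (B ^^ (j - i)) ((B ^^ i) y)" for y
    using assms(2) by (metis funpow_add le_add_diff_inverse2 o_apply)
  show ?thesis using assms(3) unfolding bnd_def e
    by (meson assms(1) iter_ge le_trans)
qed

lemma tr_split: "a \<noteq> c \<Longrightarrow> c \<noteq> k \<Longrightarrow> a \<noteq> k \<Longrightarrow> tr a k = tr c k \<circ> tr a c \<circ> tr c k"
  by (auto simp: tr_def fun_eq_iff)

lemma tr_3: "a \<noteq> k \<Longrightarrow> a \<noteq> k' \<Longrightarrow> k \<noteq> k' \<Longrightarrow> tr a k' = (tr a k \<circ> tr a k') \<circ> tr k k'"
  by (auto simp: tr_def fun_eq_iff)

lemma tr_comm: "tr a b = tr b a" by (auto simp: tr_def fun_eq_iff)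

lemma core:
  fixes \<Phi> :: "(nat\<Rightarrow>nat)\<Rightarrow>(nat\<Rightarrow>nat)" and B \<alpha> b h :: "nat \<Rightarrow> nat"
  assumes bij\<Phi>: "\<And>f. bij f \<Longrightarrow> bij (\<Phi> f)"
   and comp\<Phi>: "\<And>f g. bij f \<Longrightarrow> bij g \<Longrightarrow> \<Phi> (f \<circ> g) = \<Phi> f \<circ> \<Phi> g"
   and inj\<Phi>: "inj_on \<Phi> Sinf"
   and cont\<Phi>: "\<And>z. \<exists>N. \<forall>g\<in>Sinf. (\<forall>i<N. g i = id i) \<longrightarrow> \<Phi> g z = \<Phi> id z"
   and Bsm: "strict_mono B" and Bge: "\<And>k. Suc k \<le> B k"
   and bB: "\<And>k. b k \<le> B k"
   and \<alpha>ge: "\<And>k. Suc k \<le> \<alpha> k" and \<alpha>B: "\<And>k. n \<le> k \<Longrightarrow> (B^^5) k \<le> \<alpha> k"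
   and h: "bij h" and nM: "n \<le> M"
   and hyp: "\<And>g. g = id \<or> (\<exists>p q. g = tr p q \<and> M \<le> p \<and> p < q \<and> q \<le> \<alpha> p) \<Longrightarrow> \<Phi> (h \<circ> g) \<in> K b"
  shows False
proof -
  have monoB: "mono B" using Bsm strict_mono_mono by blast
  have Bge0: "\<And>k. k \<le> B k" using Bge Suc_leD by blast
  have \<Phi>id: "\<Phi> id = id"
  proof -
    have "\<Phi> id = \<Phi> id \<circ> \<Phi> id" using comp\<Phi>[of id id] by simp
    moreover have "inj (\<Phi> id)" using bij\<Phi>[of id] bij_is_inj by auto
    ultimately show ?thesis by (metis comp_apply eq_id_iff injD)
  qed
  have \<Phi>h: "bnd (B^^1) (\<Phi> h)"
    using hyp[of id] bB by (auto simp: K_iff bnd_def intro: le_trans)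
  have bh: "bij (\<Phi> h)" using bij\<Phi> h by auto
  have S: "bnd (B^^2) (\<Phi> (tr p q))" if "M \<le> p" "p < q" "q \<le> \<alpha> p" for p q
  proof -
    have 1: "\<Phi> (h \<circ> tr p q) \<in> K b" using hyp that by blast
    have 2: "bnd (B^^1) (\<Phi> (h \<circ> tr p q))" using 1 bB by (auto simp: K_iff bnd_def intro: le_trans)
    have e: "\<Phi> (tr p q) = iv (\<Phi> h) \<circ> \<Phi> (h \<circ> tr p q)"
      using comp\<Phi>[OF h bij_tr] bh by (metis bij_is_inj comp_assoc inv_o_cancel id_comp)
    have b1: "bij (iv (\<Phi> h))" using bh by (simp add: bij_imp_bij_inv)
    have b2: "bij (\<Phi> (h \<circ> tr p q))" using bij\<Phi> h bij_tr bij_comp by blast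
    have "bnd (B^^(1+1)) (iv (\<Phi> h) \<circ> \<Phi> (h \<circ> tr p q))"
      by (rule bnd_comp[OF monoB b1 b2 bnd_inv[OF bh \<Phi>h] 2])
    then show ?thesis using e by (metis one_add_one)
  qed
  have ne: "tr M (Suc M) \<noteq> id" by (metis id_apply n_not_Suc_n tr_def)
  have "\<Phi> (tr M (Suc M)) \<noteq> \<Phi> id"
    using inj\<Phi> ne by (auto simp: inj_on_def Sinf_def)
  then obtain x where x: "\<Phi> (tr M (Suc M)) x \<noteq> x" using \<Phi>id by (metis eq_id_iff)
  obtain N where N: "\<forall>g\<in>Sinf. (\<forall>i<N. g i = id i) \<longrightarrow> \<Phi> g x = \<Phi> id x" using cont\<Phi> by blast
  define M' where "M' = max N (M+2)"
  have fixx: "\<Phi> g x = x" if "bij g" "\<forall>i<M'. g i = i" for g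
    using N that \<Phi>id by (auto simp: M'_def Sinf_def)
  have Htr: "\<Phi> (tr k k') x = x" if "M' \<le> k" "M' \<le> k'" for k k'
    using that by (intro fixx) (auto simp: tr_def)
  have key: "\<Phi> (tr a M') x = x" if aM: "a < M'" and ni: "\<not> inj_on (\<lambda>k. \<Phi> (tr a k) x) {M'..}" for a
  proof -
    obtain k k' where kk: "M' \<le> k" "M' \<le> k'" "k \<noteq> k'" "\<Phi> (tr a k) x = \<Phi> (tr a k') x"
      using ni unfolding inj_on_def by auto
    have inv: "\<Phi> (tr a k) (\<Phi> (tr a k) y) = y" for y
      using comp\<Phi>[of "tr a k" "tr a k"] \<Phi>id tr_comp_self by (metis bij_tr comp_apply id_apply)
    have c: "\<Phi> (tr a k \<circ> tr a k') x = x" using comp\<Phi> inv kk(4) by (metis bij_tr comp_apply)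
    have eq3: "tr a k' = (tr a k \<circ> tr a k') \<circ> tr k k'" using tr_3 kk aM by auto
    have k'x: "\<Phi> (tr a k') x = x"
      by (subst eq3, subst comp\<Phi>) (use c Htr kk in \<open>auto intro: bij_comp\<close>)
    show ?thesis
    proof (cases "k' = M'")
      case True then show ?thesis using k'x by simp
    next
      case False
      have "tr a M' = tr k' M' \<circ> tr a k' \<circ> tr k' M'" using tr_split kk aM False by auto
      then show ?thesis using comp\<Phi> k'x Htr kk by (metis bij_comp bij_tr comp_apply order_refl)
    qed
  qed
  have "\<exists>a\<in>{M, Suc M}. inj_on (\<lambda>k. \<Phi> (tr a k) x) {M'..}"
  proof (rule ccontr)
    assume "\<not> ?thesis"
    then have 1: "\<Phi> (tr M M') x = x" and 2: "\<Phi> (tr (Suc M) M') x = x"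
      using key by (auto simp: M'_def)
    have "tr M (Suc M) = tr M' (Suc M) \<circ> tr M M' \<circ> tr M' (Suc M)"
      by (rule tr_split) (auto simp: M'_def)
    also have "tr M' (Suc M) = tr (Suc M) M'" by (rule tr_comm)
    finally have "\<Phi> (tr M (Suc M)) = \<Phi> (tr (Suc M) M') \<circ> \<Phi> (tr M M') \<circ> \<Phi> (tr (Suc M) M')"
      using comp\<Phi> by (metis bij_comp bij_tr)
    then have "\<Phi> (tr M (Suc M)) x = x" using 1 2 by simp
    then show False using x by simp
  qed
  then obtain a where a: "a \<in> {M, Suc M}" "inj_on (\<lambda>k. \<Phi> (tr a k) x) {M'..}" by blast
  have aM: "M \<le> a" "a < M'" "n \<le> a" using a(1) nM by (auto simp: M'_def)
  have \<alpha>ge0: "\<And>k. k \<le> \<alpha> k" using \<alpha>ge Suc_leD by blast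
  have chain: "bnd (B^^(4*Suc r)) (\<Phi> (tr a k))" if "a < k" "k \<le> (\<alpha>^^(Suc r)) a" for r k
    using that
  proof (induction r arbitrary: k)
    case 0
    then have "bnd (B^^2) (\<Phi> (tr a k))" using S aM by simp
    then show ?case by (rule bnd_weaken[OF Bge0, rotated]) simp
  next
    case (Suc r)
    define c where "c = (\<alpha>^^(Suc r)) a"
    have kc: "k \<le> \<alpha> c" using Suc.prems by (simp add: c_def)
    have ac: "a \<le> c" unfolding c_def using iter_ge[OF \<alpha>ge0] .
    show ?case
    proof (cases "k \<le> c")
      case True
      then have "bnd (B^^(4*Suc r)) (\<Phi> (tr a k))" using Suc.IH Suc.prems c_def by blast
      then show ?thesis by (rule bnd_weaken[OF Bge0, rotated]) simp
    next
      case False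
      show ?thesis
      proof (cases "c = a")
        case True
        then have "bnd (B^^2) (\<Phi> (tr a k))" using S aM kc Suc.prems by simp
        then show ?thesis by (rule bnd_weaken[OF Bge0, rotated]) simp
      next
        case ca: False
        have 1: "bnd (B^^(4*Suc r)) (\<Phi> (tr a c))" using Suc.IH ac ca c_def by simp
        have 2: "bnd (B^^2) (\<Phi> (tr c k))" using S aM ac kc False by simp
        have 3: "bnd (B^^(2 + 4*Suc r)) (\<Phi> (tr c k) \<circ> \<Phi> (tr a c))"
          by (rule bnd_comp[OF monoB]) (use 1 2 bij\<Phi> in auto)
        have 4: "bnd (B^^((2 + 4*Suc r) + 2)) ((\<Phi> (tr c k) \<circ> \<Phi> (tr a c)) \<circ> \<Phi> (tr c k))"
          by (rule bnd_comp[OF monoB]) (use 3 2 bij\<Phi> in \<open>auto intro: bij_comp\<close>)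
        have e: "\<Phi> (tr a k) = (\<Phi> (tr c k) \<circ> \<Phi> (tr a c)) \<circ> \<Phi> (tr c k)"
        proof -
          have sp: "tr a k = tr c k \<circ> tr a c \<circ> tr c k"
            by (rule tr_split) (use ca False ac Suc.prems in auto)
          show ?thesis unfolding sp by (simp add: comp\<Phi> bij_comp)
        qed
        have "(2 + 4*Suc r) + 2 = 4 * Suc (Suc r)" by simp
        then show ?thesis using 4 e by metis
      qed
    qed
  qed
  have growth: "(B^^(5*r)) a \<le> (\<alpha>^^r) a" for r
  proof (induction r)
    case (Suc r)
    have "(B^^(5*Suc r)) a = (B^^5) ((B^^(5*r)) a)" by (metis comp_apply funpow_add mult_Suc_right)
    also have "\<dots> \<le> (B^^5) ((\<alpha>^^r) a)" using Suc iter_mono[OF monoB] by blast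
    also have "\<dots> \<le> \<alpha> ((\<alpha>^^r) a)" using \<alpha>B aM iter_ge[OF \<alpha>ge0] le_trans by blast
    finally show ?case by simp
  qed simp
  define r where "r = Suc (x + M')"
  define R where "R = (\<alpha>^^r) a"
  define E where "E = B^^(4*r)"
  have big: "E x + M' + 1 \<le> R"
  proof -
    have "(B^^(5*r)) a = E ((B^^r) a)" unfolding E_def
      by (metis comp_apply funpow_add add.commute mult_Suc numeral_nat(3) numeral_nat(2) eval_nat_numeral(3))
    moreover have "x + (M' + 1) \<le> (B^^r) a" using iter_ge_plus[OF Bge, of a r] by (simp add: r_def)
    moreover have "E x + (M'+1) \<le> E (x + (M'+1))" unfolding E_def
      by (rule smono_plus[OF iter_smono[OF Bsm]])
    moreover have "mono E" unfolding E_def by (simp add: iter_smono[OF Bsm] strict_mono_mono)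
    ultimately have "E x + (M'+1) \<le> (B^^(5*r)) a" by (metis le_trans monoD)
    then show ?thesis using growth[of r] R_def by simp
  qed
  have inj2: "inj_on (\<lambda>k. \<Phi> (tr a k) x) {M'..R}" using a(2) by (rule inj_on_subset) auto
  have img: "(\<lambda>k. \<Phi> (tr a k) x) ` {M'..R} \<subseteq> {0..E x}"
  proof
    fix y assume "y \<in> (\<lambda>k. \<Phi> (tr a k) x) ` {M'..R}"
    then obtain k where k: "M' \<le> k" "k \<le> R" "y = \<Phi> (tr a k) x" by auto
    have "bnd E (\<Phi> (tr a k))" unfolding E_def r_def
      by (rule chain) (use k aM R_def r_def in auto)
    then show "y \<in> {0..E x}" using k by (simp add: bnd_def)
  qed
  have "card {M'..R} \<le> card {0..E x}" using card_inj_on_le[OF inj2 img] by simp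
  then show False using big by simp
qed

definition Bf :: "(nat\<Rightarrow>nat)\<Rightarrow>nat\<Rightarrow>nat" where "Bf b k = Suc k + (\<Sum>i\<le>k. b i)"

lemma Bf_smono: "strict_mono (Bf b)"
  by (rule strict_monoI_Suc) (simp add: Bf_def)
lemma Bf_ge: "Suc k \<le> Bf b k" by (simp add: Bf_def)
lemma Bf_b: "b k \<le> Bf b k"
proof -
  have "b k \<le> (\<Sum>i\<le>k. b i)" by (rule member_le_sum) auto
  then show ?thesis by (simp add: Bf_def)
qed

definition alp :: "(nat \<Rightarrow> nat \<Rightarrow> nat) \<Rightarrow> nat \<Rightarrow> nat" where
  "alp \<beta> k = Suc k + (\<Sum>m\<le>k. (Bf (\<beta> m) ^^ 5) k)"

lemma alp_ge: "Suc k \<le> alp \<beta> k" by (simp add: alp_def)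
lemma alp_B: "n \<le> k \<Longrightarrow> (Bf (\<beta> n) ^^ 5) k \<le> alp \<beta> k"
proof -
  assume "n \<le> k"
  then have "(Bf (\<beta> n) ^^ 5) k \<le> (\<Sum>m\<le>k. (Bf (\<beta> m) ^^ 5) k)"
    by (intro member_le_sum[where f="\<lambda>m. (Bf (\<beta> m) ^^ 5) k"]) auto
  then show ?thesis by (simp add: alp_def)
qed

lemma comp_tr_K:
  assumes h: "bij h" "\<forall>i\<ge>M. h i = i" "h \<in> K \<alpha>" and \<alpha>: "\<And>k. Suc k \<le> \<alpha> k"
    and pq: "M \<le> p" "p < q" "q \<le> \<alpha> p"
  shows "h \<circ> tr p q \<in> K \<alpha>"
proof -
  have trb: "tr p q i \<le> \<alpha> i" for i
    using pq \<alpha>[of i] \<alpha>[of q] by (auto simp: tr_def)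
  have hb: "bnd \<alpha> h" using h by (simp add: K_iff)
  have ivh: "iv h i = i" if "M \<le> i" for i using h that by (metis bij_is_inj inv_f_f)
  have ivl: "iv h i < M" if "i < M" for i
    using h that by (metis bij_inv_eq_iff not_less)
  have 1: "(h \<circ> tr p q) i \<le> \<alpha> i" for i
  proof (cases "i < M")
    case True then have "tr p q i = i" using pq by (auto simp: tr_def)
    then show ?thesis using hb by (simp add: bnd_def)
  next
    case False then have "M \<le> tr p q i" using pq by (auto simp: tr_def)
    then show ?thesis using h trb by simp
  qed
  have 2: "iv (h \<circ> tr p q) i \<le> \<alpha> i" for i
  proof -
    have e: "iv (h \<circ> tr p q) = tr p q \<circ> iv h" using h(1) by (simp add: o_inv_distrib)
    show ?thesis
    proof (cases "i < M")
      case True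
      then have "iv h i < M" using ivl by blast
      then have "tr p q (iv h i) = iv h i" using pq by (auto simp: tr_def)
      then show ?thesis using e hb by (simp add: bnd_def)
    next
      case False then show ?thesis using e ivh trb by simp
    qed
  qed
  show ?thesis using 1 2 h(1) by (simp add: K_iff bnd_def bij_comp)
qed

lemma step:
  fixes \<Phi> :: "(nat\<Rightarrow>nat)\<Rightarrow>(nat\<Rightarrow>nat)" and \<beta> :: "nat \<Rightarrow> nat \<Rightarrow> nat"
  assumes bij\<Phi>: "\<And>f. bij f \<Longrightarrow> bij (\<Phi> f)"
   and comp\<Phi>: "\<And>f g. bij f \<Longrightarrow> bij g \<Longrightarrow> \<Phi> (f \<circ> g) = \<Phi> f \<circ> \<Phi> g"
   and inj\<Phi>: "inj_on \<Phi> Sinf"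
   and cont\<Phi>: "\<And>f z. f \<in> Sinf \<Longrightarrow> \<exists>N. \<forall>g\<in>Sinf. (\<forall>i<N. g i = f i) \<longrightarrow> \<Phi> g z = \<Phi> f z"
   and h: "bij h" "\<forall>i\<ge>M. h i = i" "h \<in> K (alp \<beta>)" "n \<le> M"
  shows "\<exists>h' M'. bij h' \<and> (\<forall>i\<ge>M'. h' i = i) \<and> h' \<in> K (alp \<beta>) \<and> Suc n \<le> M' \<and> M < M'
     \<and> (\<forall>i<M. h' i = h i) \<and> (\<forall>g\<in>Sinf. (\<forall>i<M'. g i = h' i) \<longrightarrow> \<Phi> g \<notin> K (\<beta> n))"
proof -
  have c0: "\<And>z. \<exists>N. \<forall>g\<in>Sinf. (\<forall>i<N. g i = id i) \<longrightarrow> \<Phi> g z = \<Phi> id z"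
    using cont\<Phi>[of id] by (simp add: Sinf_def)
  have aB: "\<And>k. n \<le> k \<Longrightarrow> (Bf (\<beta> n) ^^ 5) k \<le> alp \<beta> k" by (rule alp_B)
  obtain g where g: "g = id \<or> (\<exists>p q. g = tr p q \<and> M \<le> p \<and> p < q \<and> q \<le> alp \<beta> p)"
     and ng: "\<Phi> (h \<circ> g) \<notin> K (\<beta> n)"
    using core[OF bij\<Phi> comp\<Phi> inj\<Phi> c0 Bf_smono Bf_ge Bf_b alp_ge aB h(1) h(4)] by blast
  define h' where "h' = h \<circ> g"
  obtain Q where Q: "\<forall>i\<ge>Q. g i = i" and gM: "\<forall>i<M. g i = i" and hK: "h' \<in> K (alp \<beta>)"
    and bg: "bij g"
  proof (cases "g = id")
    case True then show ?thesis using that[of 0] h by (simp add: h'_def)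
  next
    case False
    then obtain p q where pq: "g = tr p q" "M \<le> p" "p < q" "q \<le> alp \<beta> p" using g by blast
    show ?thesis
    proof (rule that[of "Suc q"])
      show "\<forall>i\<ge>Suc q. g i = i" using pq by (auto simp: tr_def)
      show "\<forall>i<M. g i = i" using pq by (auto simp: tr_def)
      show "h' \<in> K (alp \<beta>)" unfolding h'_def pq(1)
        by (rule comp_tr_K[OF h(1,2,3) alp_ge pq(2,3,4)])
      show "bij g" using pq by simp
    qed
  qed
  have bh': "bij h'" using h bg by (simp add: h'_def bij_comp)
  have bph: "bij (\<Phi> h')" using bij\<Phi> bh' by blast
  have "\<not> bnd (\<beta> n) (\<Phi> h')" using ng bph by (simp add: K_iff h'_def)
  then obtain y0 where "\<beta> n y0 < \<Phi> h' y0 \<or> \<beta> n y0 < iv (\<Phi> h') y0" by (auto simp: bnd_def not_le)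
  then obtain z y where zy: "\<Phi> h' z = y" "\<beta> n z < y \<or> \<beta> n y < z"
  proof
    assume "\<beta> n y0 < \<Phi> h' y0" then show ?thesis using that[of y0 "\<Phi> h' y0"] by simp
  next
    assume "\<beta> n y0 < iv (\<Phi> h') y0"
    moreover have "\<Phi> h' (iv (\<Phi> h') y0) = y0" using bph by (meson bij_inv_eq_iff)
    ultimately show ?thesis using that[of "iv (\<Phi> h') y0" y0] by simp
  qed
  obtain N where N: "\<forall>g\<in>Sinf. (\<forall>i<N. g i = h' i) \<longrightarrow> \<Phi> g z = \<Phi> h' z"
    using cont\<Phi>[of h' z] bh' by (auto simp: Sinf_def)
  define M' where "M' = N + M + Q + Suc n"
  show ?thesis
  proof (intro exI conjI allI impI ballI)
    show "bij h'" by (rule bh')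
    show "h' \<in> K (alp \<beta>)" by (rule hK)
    show "Suc n \<le> M'" "M < M'" by (auto simp: M'_def)
    fix i
    show "M' \<le> i \<Longrightarrow> h' i = i" using Q h(2) by (auto simp: h'_def M'_def)
    show "i < M \<Longrightarrow> h' i = h i" using gM by (simp add: h'_def)
  next
    fix f assume f: "f \<in> Sinf" "\<forall>i<M'. f i = h' i"
    then have fz: "\<Phi> f z = y" using N zy by (auto simp: M'_def)
    have bf: "bij (\<Phi> f)" using f bij\<Phi> by (simp add: Sinf_def)
    show "\<Phi> f \<notin> K (\<beta> n)"
    proof
      assume "\<Phi> f \<in> K (\<beta> n)"
      then have b: "bnd (\<beta> n) (\<Phi> f)" by (simp add: K_iff)
      have "iv (\<Phi> f) y = z" using fz bf by (metis bij_is_inj inv_f_f)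
      moreover have "\<Phi> f z \<le> \<beta> n z" "iv (\<Phi> f) y \<le> \<beta> n y" using b by (auto simp: bnd_def)
      ultimately show False using zy(2) fz by auto
    qed
  qed
qed

theorem mainTheorem11:
  fixes \<beta> :: "nat \<Rightarrow> nat \<Rightarrow> nat"
  shows "\<exists>\<alpha> :: nat \<Rightarrow> nat. \<forall>\<Phi> :: (nat \<Rightarrow> nat) \<Rightarrow> (nat \<Rightarrow> nat).
           \<Phi> \<in> hom (BijGroup (UNIV :: nat set)) (BijGroup (UNIV :: nat set))
           \<and> inj_on \<Phi> Sinf \<and> continuous_on Sinf \<Phi>
           \<longrightarrow> \<not> (\<Phi> ` K \<alpha> \<subseteq> (\<Union>n. K (\<beta> n)))"
proof (intro exI allI impI)
  fix \<Phi> :: "(nat \<Rightarrow> nat) \<Rightarrow> (nat \<Rightarrow> nat)"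
  assume A: "\<Phi> \<in> hom (BijGroup (UNIV :: nat set)) (BijGroup (UNIV :: nat set))
           \<and> inj_on \<Phi> Sinf \<and> continuous_on Sinf \<Phi>"
  have bij\<Phi>: "\<And>f. bij f \<Longrightarrow> bij (\<Phi> f)" using hom_props(1) A by blast
  have comp\<Phi>: "\<And>f g. bij f \<Longrightarrow> bij g \<Longrightarrow> \<Phi> (f \<circ> g) = \<Phi> f \<circ> \<Phi> g" using hom_props(2) A by blast
  have inj\<Phi>: "inj_on \<Phi> Sinf" using A by blast
  have cont\<Phi>: "\<And>f z. f \<in> Sinf \<Longrightarrow> \<exists>N. \<forall>g\<in>Sinf. (\<forall>i<N. g i = f i) \<longrightarrow> \<Phi> g z = \<Phi> f z"
    using cont_pt A by blast
  define \<alpha> where "\<alpha> = alp \<beta>"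
  show "\<not> (\<Phi> ` K (alp \<beta>) \<subseteq> (\<Union>n. K (\<beta> n)))"
  proof
    assume sub: "\<Phi> ` K (alp \<beta>) \<subseteq> (\<Union>n. K (\<beta> n))"
    define P where "P n h M h' M' \<longleftrightarrow> bij h' \<and> (\<forall>i\<ge>M'. h' i = i) \<and> h' \<in> K \<alpha> \<and> Suc n \<le> M' \<and> M < M'
       \<and> (\<forall>i<M. h' i = h i) \<and> (\<forall>g\<in>Sinf. (\<forall>i<M'. g i = h' i) \<longrightarrow> \<Phi> g \<notin> K (\<beta> n))"
      for n :: nat and h :: "nat \<Rightarrow> nat" and M and h' :: "nat \<Rightarrow> nat" and M'
    define st where "st = rec_nat (id, 0) (\<lambda>n s. SOME s'. P n (fst s) (snd s) (fst s') (snd s'))"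
    define H where "H n = fst (st n)" for n
    define Mn where "Mn n = snd (st n)" for n
    have stS: "st (Suc n) = (SOME s'. P n (H n) (Mn n) (fst s') (snd s'))" for n
      by (simp add: st_def H_def Mn_def)
    have Pstep: "P n (H n) (Mn n) (H (Suc n)) (Mn (Suc n))"
      if hyps: "bij (H n)" "\<forall>i\<ge>Mn n. H n i = i" "H n \<in> K \<alpha>" "n \<le> Mn n" for n
    proof -
      obtain h' M' where "P n (H n) (Mn n) h' M'"
        using step[OF bij\<Phi> comp\<Phi> inj\<Phi> cont\<Phi> hyps[unfolded \<alpha>_def]] unfolding P_def \<alpha>_def by blast
      then have "\<exists>s'. P n (H n) (Mn n) (fst s') (snd s')" by (intro exI[of _ "(h', M')"]) simp
      from someI_ex[OF this] show ?thesis unfolding H_def[of "Suc n"] Mn_def[of "Suc n"] stS .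
    qed
    have Inv: "bij (H n) \<and> (\<forall>i\<ge>Mn n. H n i = i) \<and> H n \<in> K \<alpha> \<and> n \<le> Mn n" for n
    proof (induction n)
      case 0
      have "id \<in> K \<alpha>" using alp_ge by (auto simp: K_iff bnd_def \<alpha>_def intro: Suc_leD)
      then show ?case using bij_id[unfolded id_def] by (simp add: H_def Mn_def st_def id_def)
    next
      case (Suc n)
      then have "P n (H n) (Mn n) (H (Suc n)) (Mn (Suc n))" using Pstep by blast
      then show ?case by (simp add: P_def)
    qed
    have PS: "P n (H n) (Mn n) (H (Suc n)) (Mn (Suc n))" for n using Pstep Inv by blast
    have Mlt: "Mn n < Mn (Suc n)" for n using PS[of n] by (simp add: P_def)
    have Mmono: "n \<le> m \<Longrightarrow> Mn n \<le> Mn m" for n m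
      using Mlt by (metis lift_Suc_mono_le less_imp_le)
    have agree: "\<forall>i<Mn n. H m i = H n i" if "n \<le> m" for n m
      using that
    proof (induction m rule: dec_induct)
      case (step m)
      have "\<forall>i<Mn m. H (Suc m) i = H m i" using PS[of m] by (simp add: P_def)
      then show ?case using step Mmono[OF step(1)] by auto
    qed simp
    define f where "f k = H (Suc k) k" for k
    have fH: "f i = H n i" if "i < Mn n" for i n
    proof (cases "n \<le> Suc i")
      case True then show ?thesis using agree[OF True] that by (simp add: f_def)
    next
      case False
      have "i < Mn (Suc i)" using Inv[of "Suc i"] by simp
      then show ?thesis using agree[of "Suc i" n] False by (simp add: f_def)
    qed
    have injf: "inj f"
    proof (rule injI)
      fix i j assume "f i = f j"
      moreover have "i < Mn (Suc (i+j))" "j < Mn (Suc (i+j))" using Inv[of "Suc (i+j)"] by auto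
      ultimately have "H (Suc (i+j)) i = H (Suc (i+j)) j" using fH by metis
      then show "i = j" using Inv[of "Suc (i+j)"] by (meson bij_is_inj injD)
    qed
    have surjf: "\<exists>j. f j = y \<and> j \<le> \<alpha> y" for y
    proof -
      define n where "n = Suc (\<alpha> y)"
      define j where "j = iv (H n) y"
      have "j \<le> \<alpha> y" using Inv[of n] by (simp add: K_iff bnd_def j_def)
      moreover have "j < Mn n" using Inv[of n] \<open>j \<le> \<alpha> y\<close> by (simp add: n_def)
      moreover have "H n j = y" using Inv[of n] unfolding j_def by (meson bij_inv_eq_iff)
      ultimately show ?thesis using fH by metis
    qed
    have bf: "bij f" using injf surjf by (metis bij_def surjI)
    have fK: "f \<in> K \<alpha>"
    proof -
      have "f k \<le> \<alpha> k" for k using Inv[of "Suc k"] by (simp add: f_def K_iff bnd_def)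
      moreover have "iv f y \<le> \<alpha> y" for y using surjf[of y] injf by (metis inv_f_f)
      ultimately show ?thesis using bf by (simp add: K_iff bnd_def)
    qed
    then obtain n where n: "\<Phi> f \<in> K (\<beta> n)" using sub \<alpha>_def by blast
    have "f \<in> Sinf" using bf by (simp add: Sinf_def)
    moreover have "\<forall>i<Mn (Suc n). f i = H (Suc n) i" using fH by blast
    ultimately have "\<Phi> f \<notin> K (\<beta> n)" using PS[of n] by (simp add: P_def)
    then show False using n by simp
  qed
qed

end
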